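(* Let $v \in \mathbb{R}$ and $x > 0$, and for $t \ge 0$ define $$f_{v,x}(t) = \cosh(vt)\,\exp(-x\cosh t), \qquad g_{v,x}(t) = \log f_{v,x}(t) = \log\cosh(vt) - x\cosh t .$$ Then: (i) if $v^2 \le x$, the function $g_{v,x}$ is monotonically decreasing on $[0,\infty)$, so its maximum on $[0,\infty)$ is attained at $t_p = 0$; (ii) if $v^2 > x$, the function $g_{v,x}$ has exactly one peak on $[0,\infty)$: there is a unique $t_p > 0$ with $g'_{v,x}(t_p) = 0$, and $g'_{v,x}(t) > 0$ for $0 < t < t_p$ and $g'_{v,x}(t) < 0$ for $t > t_p$. Moreover, in either case, letting $t_p$ be the maximizer of $f_{v,x}$ on $[0,\infty)$, for every $\epsilon \in (0,1)$ the set $\{t \ge 0 : f_{v,x}(t) \ge \epsilon\, f_{v,x}(t_p)\}$ is a single closed bounded interval $[t_0, t_1]$ with $0 \le t_0 \le t_p \le t_1$.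
   Context: These functions arise from the integral representation $K_v(x) = \int_0^\infty f_{v,x}(t)\,dt$ of the modified Bessel function of the second kind, so the variable $t$ ranges over $[0,\infty)$. *)

theory Defs
  imports "HOL-Analysis.Analysis"
begin

text \<open>Integrand of K_v(x) and its logarithm, as functions of t (t >= 0).\<close>
definition fK :: "real \<Rightarrow> real \<Rightarrow> real \<Rightarrow> real" where
  "fK v x t = cosh (v * t) * exp (- x * cosh t)"

definition gK :: "real \<Rightarrow> real \<Rightarrow> real \<Rightarrow> real" where
  "gK v x t = ln (cosh (v * t)) - x * cosh t"

end

theory Submission imports Defs "HOL-Real_Asymp.Real_Asymp" begin

lemma sinh_gt_self: assumes "(0::real) < y" shows "y < sinh y"
proof -
  have "(\<lambda>u. sinh u - u) 0 < (\<lambda>u. sinh u - u) y"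
  proof (rule DERIV_pos_imp_increasing_open[OF assms])
    fix u :: real assume "0 < u" "u < y"
    then show "\<exists>d. ((\<lambda>u. sinh u - u) has_real_derivative d) (at u) \<and> d > 0"
    proof -
      have "cosh u \<noteq> 1" using \<open>0 < u\<close> by simp
      then have "1 < cosh u" using cosh_real_ge_1[of u] by linarith
      then show ?thesis
        by (intro exI[of _ "cosh u - 1"]) (auto intro!: derivative_eq_intros)
    qed
  qed (intro continuous_intros)
  then show ?thesis by simp
qed

lemma tcosh_gt_sinh: assumes "(0::real) < t" shows "sinh t < t * cosh t"
proof -
  have "(\<lambda>u. u * cosh u - sinh u) 0 < (\<lambda>u. u * cosh u - sinh u) t"
  proof (rule DERIV_pos_imp_increasing_open[OF assms])
    fix u :: real assume "0 < u" "u < t"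
    then show "\<exists>d. ((\<lambda>u. u * cosh u - sinh u) has_real_derivative d) (at u) \<and> d > 0"
      by (intro exI[of _ "u * sinh u"]) (auto intro!: derivative_eq_intros)
  qed (intro continuous_intros)
  then show ?thesis by simp
qed

lemma p_dec: assumes "(0::real) < s" "s < t"
  shows "sinh t / (t * cosh t) < sinh s / (s * cosh s)"
proof -
  have "(\<lambda>u. sinh u / (u * cosh u)) s > (\<lambda>u. sinh u / (u * cosh u)) t"
  proof (rule DERIV_neg_imp_decreasing_open[OF assms(2)])
    fix u :: real assume u: "s < u" "u < t"
    then have u0: "u > 0" using assms by auto
    have "((\<lambda>u. sinh u / (u * cosh u)) has_real_derivative
        (cosh u * (u * cosh u) - sinh u * (1 * cosh u + u * sinh u)) / (u * cosh u)^2) (at u)"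
      using u0 by (auto intro!: derivative_eq_intros simp: power2_eq_square)
    moreover have "(cosh u * (u * cosh u) - sinh u * (1 * cosh u + u * sinh u)) = u - sinh u * cosh u"
      by (simp add: algebra_simps power2_eq_square[symmetric] cosh_square_eq)
    moreover have "u - sinh u * cosh u < 0"
      using sinh_gt_self[of "2*u"] u0 by (simp add: sinh_double)
    moreover have "(u * cosh u)^2 > 0" using u0 by simp
    ultimately show "\<exists>d. ((\<lambda>u. sinh u / (u * cosh u)) has_real_derivative d) (at u) \<and> d < 0"
      by (metis divide_neg_pos)
  qed (use assms in \<open>intro continuous_intros; auto\<close>)
  then show ?thesis by simp
qed

lemma q_dec: assumes "(0::real) < s" "s < t"
  shows "t / sinh t < s / sinh s"
proof -
  have "(\<lambda>u. u / sinh u) s > (\<lambda>u. u / sinh u) t"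
  proof (rule DERIV_neg_imp_decreasing_open[OF assms(2)])
    fix u :: real assume u: "s < u" "u < t"
    then have u0: "u > 0" using assms by auto
    have "((\<lambda>u. u / sinh u) has_real_derivative (1 * sinh u - u * cosh u) / (sinh u)^2) (at u)"
      using u0 by (auto intro!: derivative_eq_intros simp: power2_eq_square)
    moreover have "1 * sinh u - u * cosh u < 0" using tcosh_gt_sinh[OF u0] by simp
    moreover have "(sinh u)^2 > 0" using u0 by simp
    ultimately show "\<exists>d. ((\<lambda>u. u / sinh u) has_real_derivative d) (at u) \<and> d < 0"
      by (metis divide_neg_pos)
  qed (use assms in \<open>intro continuous_intros; auto\<close>)
  then show ?thesis by simp
qed

lemma gK_deriv: "(gK v x has_real_derivative (v * sinh (v * t) / cosh (v * t) - x * sinh t)) (at t)"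
  unfolding gK_def[abs_def]
  by (auto intro!: derivative_eq_intros simp: field_simps)

definition Dd :: "real \<Rightarrow> real \<Rightarrow> real \<Rightarrow> real" where
  "Dd v x t = v * sinh (v * t) / cosh (v * t) - x * sinh t"

definition HH :: "real \<Rightarrow> real \<Rightarrow> real" where
  "HH v t = \<bar>v\<bar> * sinh (\<bar>v\<bar> * t) / cosh (\<bar>v\<bar> * t) / sinh t"

lemma deriv_gK: "deriv (gK v x) t = Dd v x t"
  unfolding Dd_def by (rule DERIV_imp_deriv[OF gK_deriv])

lemma vsinh: "(v::real) * sinh (v * t) = \<bar>v\<bar> * sinh (\<bar>v\<bar> * t)"
  by (cases "v \<ge> 0") auto

lemma vcosh: "cosh ((v::real) * t) = cosh (\<bar>v\<bar> * t)"
  by (cases "v \<ge> 0") auto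

lemma D_eq: assumes "t > 0" shows "Dd v x t = sinh t * (HH v t - x)"
  proof -
  have "sinh t > 0" using assms by simp
  then show ?thesis unfolding Dd_def HH_def vsinh[of v t] vcosh[of v t]
    by (simp add: field_simps)
qed

lemma H_dec: assumes "v \<noteq> 0" "0 < s" "s < t" shows "HH v t < HH v s"
proof -
  define a where "a = \<bar>v\<bar>"
  have a: "a > 0" using assms a_def by auto
  have eq: "HH v r = a * a * (sinh (a * r) / ((a * r) * cosh (a * r))) * (r / sinh r)" if "r > 0" for r
    using that a unfolding HH_def a_def[symmetric] by (simp add: field_simps)
  have p: "sinh (a * t) / ((a * t) * cosh (a * t)) < sinh (a * s) / ((a * s) * cosh (a * s))"
    using p_dec[of "a * s" "a * t"] a assms by simp
  have q: "t / sinh t < s / sinh s" using q_dec assms by simp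
  have p0: "0 < sinh (a * t) / ((a * t) * cosh (a * t))" using a assms by simp
  have q0: "0 < t / sinh t" using assms by simp
  have "(sinh (a * t) / ((a * t) * cosh (a * t))) * (t / sinh t)
      < (sinh (a * s) / ((a * s) * cosh (a * s))) * (s / sinh s)"
    by (rule mult_strict_mono[OF p q]) (use p0 q0 p in linarith)+
  then have "a * a * ((sinh (a * t) / ((a * t) * cosh (a * t))) * (t / sinh t))
      < a * a * ((sinh (a * s) / ((a * s) * cosh (a * s))) * (s / sinh s))"
    by (rule mult_strict_left_mono) (use a in simp)
  moreover have "HH v t = a * a * ((sinh (a * t) / ((a * t) * cosh (a * t))) * (t / sinh t))"
    using eq[of t] assms by (simp only: mult.assoc)
  moreover have "HH v s = a * a * ((sinh (a * s) / ((a * s) * cosh (a * s))) * (s / sinh s))"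
    using eq[of s] assms by (simp only: mult.assoc)
  ultimately show ?thesis by simp
qed

lemma H_lim: assumes "v \<noteq> 0" shows "(HH v \<longlongrightarrow> v^2) (at_right 0)"
proof -
  define a where "a = \<bar>v\<bar>"
  have a: "a > 0" using assms a_def by auto
  have "((\<lambda>t. a * sinh (a * t) / cosh (a * t) / sinh t) \<longlongrightarrow> a * a) (at_right 0)"
    using a by real_asymp
  moreover have "a * a = v^2" unfolding a_def by (simp add: power2_eq_square[symmetric])
  ultimately show ?thesis unfolding HH_def a_def by simp
qed

lemma Dd_cont: "isCont (Dd v x) t"
  unfolding Dd_def[abs_def] by (intro continuous_intros) auto

lemma D_nonpos: assumes "v^2 \<le> x" "t \<ge> 0" shows "Dd v x t \<le> 0"
proof -
  define a where "a = \<bar>v\<bar>"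
  have a: "a \<ge> 0" using a_def by auto
  have x0: "0 \<le> x" by (rule order_trans[OF zero_le_power2 assms(1)])
  have at0: "a * t \<ge> 0" using a assms by simp
  have g: "sinh u \<le> u * cosh u" if "u \<ge> 0" for u :: real
  proof (cases "u = 0")
    case True then show ?thesis by simp
  next
    case False then show ?thesis using tcosh_gt_sinh[of u] that by linarith
  qed
  have "sinh (a * t) \<le> (a * t) * cosh (a * t)" by (rule g[OF at0])
  then have "sinh (a * t) / cosh (a * t) \<le> a * t" by (simp add: divide_le_eq)
  then have 1: "a * (sinh (a * t) / cosh (a * t)) \<le> a * (a * t)" using a by (rule mult_left_mono)
  have 2: "a * (a * t) = v^2 * t" unfolding a_def by (simp add: power2_eq_square)
  have 3: "v^2 * t \<le> x * t" using assms by (rule mult_right_mono)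
  have "t \<le> sinh t"
  proof (cases "t = 0")
    case True then show ?thesis by simp
  next
    case False then show ?thesis using sinh_gt_self[of t] assms by linarith
  qed
  then have 4: "x * t \<le> x * sinh t" using x0 by (rule mult_left_mono)
  have "v * sinh (v * t) / cosh (v * t) = a * (sinh (a * t) / cosh (a * t))"
    unfolding a_def vsinh[of v t] vcosh[of v t] by simp
  then show ?thesis unfolding Dd_def using 1 2 3 4 by linarith
qed

lemma fK_exp: "fK v x t = exp (gK v x t)"
  proof -
  have "exp (gK v x t) = exp (ln (cosh (v * t))) * exp (- x * cosh t)"
  proof -
    have "gK v x t = ln (cosh (v * t)) + (- x * cosh t)" unfolding gK_def by simp
    then show ?thesis by (simp only: exp_add)
  qed
  then show ?thesis unfolding fK_def by simp
qed

lemma fK_lim: "x > 0 \<Longrightarrow> \<exists>N. \<forall>t\<ge>N. fK v x t < c" if "c > 0"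
proof -
  assume x: "x > 0"
  define a where "a = \<bar>v\<bar> + 1"
  have a: "a > 0" using a_def by auto
  have "((\<lambda>t. cosh (a*t) * exp (- x * cosh t)) \<longlongrightarrow> 0) at_top"
    using a x by real_asymp
  from order_tendstoD(2)[OF this that] obtain N where N: "\<forall>t\<ge>N. cosh (a*t) * exp (- x * cosh t) < c"
    by (auto simp: eventually_at_top_linorder)
  have "fK v x t < c" if "t \<ge> max N 0" for t
  proof -
    have "cosh (v * t) = cosh (\<bar>v\<bar> * t)" by (rule vcosh)
    also have "\<dots> \<le> cosh (a * t)" using that a_def
      by (subst cosh_real_nonneg_le_iff) (auto intro!: mult_right_mono)
    finally have "fK v x t \<le> cosh (a*t) * exp (- x * cosh t)"
      unfolding fK_def by (simp add: mult_right_mono)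
    also have "\<dots> < c" using N that by auto
    finally show ?thesis .
  qed
  then show ?thesis by blast
qed

lemma gK_deriv': "(gK v x has_real_derivative Dd v x t) (at t)"
  unfolding Dd_def by (rule gK_deriv)

lemma strong:
  assumes x: "x > 0" and h: "v^2 > x"
  shows "\<exists>tp0>0. Dd v x tp0 = 0 \<and> (\<forall>tp>0. Dd v x tp = 0 \<longrightarrow>
           (\<forall>t. 0 < t \<and> t < tp \<longrightarrow> Dd v x t > 0) \<and> (\<forall>t>tp. Dd v x t < 0))"
proof -
  have v: "v \<noteq> 0" using h x by auto
  define a where "a = \<bar>v\<bar>"
  have a: "a > 0" using v a_def by auto
  have sign: "(\<forall>t. 0 < t \<and> t < tp \<longrightarrow> Dd v x t > 0) \<and> (\<forall>t>tp. Dd v x t < 0)"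
    if tp: "tp > 0" "Dd v x tp = 0" for tp
  proof -
    have Htp: "HH v tp = x" using D_eq[OF tp(1), of v x] tp by simp
    show ?thesis
    proof safe
      fix t assume t: "0 < t" "t < tp"
      have "HH v tp < HH v t" by (rule H_dec[OF v t])
      then show "Dd v x t > 0" using D_eq[OF t(1), of v x] Htp t by simp
    next
      fix t assume t: "tp < t"
      have "HH v t < HH v tp" by (rule H_dec[OF v tp(1) t])
      then show "Dd v x t < 0" using D_eq[of t v x] Htp t tp
        by (simp add: mult_pos_neg)
    qed
  qed
  from order_tendstoD(1)[OF H_lim[OF v] h]
  obtain b where b: "b > 0" "\<forall>y>0. y < b \<longrightarrow> x < HH v y"
    by (auto simp: eventually_at_right_field)
  define t1 where "t1 = b / 2"
  have t1: "t1 > 0" "x < HH v t1" using b unfolding t1_def by auto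
  define T where "T = a / x"
  have T: "T > 0" using a x unfolding T_def by simp
  have lt1: "sinh (a * T) / cosh (a * T) < 1"
    using sinh_less_cosh_real[of "a * T"] by simp
  have "a * (sinh (a * T) / cosh (a * T)) < a * 1"
    by (rule mult_strict_left_mono[OF lt1 a])
  then have 1: "a * (sinh (a * T) / cosh (a * T)) < a" by (simp only: mult_1_right)
  have sT: "T \<le> sinh T" using sinh_gt_self[OF T] by simp
  have sT0: "sinh T > 0" using T by simp
  have "HH v T = a * (sinh (a * T) / cosh (a * T)) / sinh T"
    unfolding HH_def a_def by simp
  also have "\<dots> < a / sinh T" by (rule divide_strict_right_mono[OF 1 sT0])
  also have "\<dots> \<le> a / T" using sT T a by (simp add: divide_left_mono)
  also have "\<dots> = x" unfolding T_def using a x by simp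
  finally have HT: "HH v T < x" .
  have t1T: "t1 < T"
  proof (rule ccontr)
    assume "\<not> t1 < T"
    then have "T = t1 \<or> T < t1" by auto
    then show False
    proof
      assume "T = t1" then show False using HT t1 by simp
    next
      assume "T < t1" then have "HH v t1 < HH v T" by (rule H_dec[OF v T])
      then show False using HT t1 by simp
    qed
  qed
  have D1: "Dd v x t1 > 0" using D_eq[OF t1(1), of v x] t1 by simp
  have DT: "Dd v x T < 0" using D_eq[OF T, of v x] HT T by (simp add: mult_pos_neg)
  obtain tp0 where tp0: "t1 \<le> tp0" "tp0 \<le> T" "Dd v x tp0 = 0"
  proof -
    have "\<exists>y. t1 \<le> y \<and> y \<le> T \<and> Dd v x y = 0"
      by (rule IVT2[of "Dd v x" T 0 t1]) (use D1 DT t1T Dd_cont in auto)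
    then show ?thesis using that by blast
  qed
  have "tp0 > 0" using tp0 t1 by simp
  then show ?thesis using tp0 sign by blast
qed

theorem mainTheorem1:
  fixes v x :: real
  assumes "x > 0"
  shows "(v\<^sup>2 \<le> x \<longrightarrow>
            (\<forall>s t. 0 \<le> s \<and> s \<le> t \<longrightarrow> gK v x t \<le> gK v x s) \<and>
            (\<forall>t\<ge>0. gK v x t \<le> gK v x 0))
       \<and> (v\<^sup>2 > x \<longrightarrow>
            (\<exists>!tp. tp > 0 \<and> deriv (gK v x) tp = 0) \<and>
            (\<forall>tp. tp > 0 \<and> deriv (gK v x) tp = 0 \<longrightarrow>
               (\<forall>t. 0 < t \<and> t < tp \<longrightarrow> deriv (gK v x) t > 0) \<and>
               (\<forall>t. t > tp \<longrightarrow> deriv (gK v x) t < 0)))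
       \<and> (\<exists>tp\<ge>0. \<forall>t\<ge>0. fK v x t \<le> fK v x tp)
       \<and> (\<forall>tp. tp \<ge> 0 \<and> (\<forall>t\<ge>0. fK v x t \<le> fK v x tp) \<longrightarrow>
            (\<forall>\<epsilon>. 0 < \<epsilon> \<and> \<epsilon> < 1 \<longrightarrow>
              (\<exists>t0 t1. 0 \<le> t0 \<and> t0 \<le> tp \<and> tp \<le> t1 \<and>
                 {t. t \<ge> 0 \<and> fK v x t \<ge> \<epsilon> * fK v x tp} = {t0..t1})))"
proof -
  have x: "x > 0" by fact
  have monoA: "gK v x t \<le> gK v x s" if h: "v^2 \<le> x" and st: "0 \<le> s" "s \<le> t" for s t
  proof (rule DERIV_nonpos_imp_nonincreasing[OF st(2)])
    fix y assume "s \<le> y" "y \<le> t"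
    then show "\<exists>d. (gK v x has_real_derivative d) (at y) \<and> d \<le> 0"
      using gK_deriv' D_nonpos[OF h, of y] st by auto
  qed
  have P1: "v\<^sup>2 \<le> x \<longrightarrow>
            (\<forall>s t. 0 \<le> s \<and> s \<le> t \<longrightarrow> gK v x t \<le> gK v x s) \<and>
            (\<forall>t\<ge>0. gK v x t \<le> gK v x 0)"
    using monoA by auto
  have P2: "v\<^sup>2 > x \<longrightarrow>
            (\<exists>!tp. tp > 0 \<and> deriv (gK v x) tp = 0) \<and>
            (\<forall>tp. tp > 0 \<and> deriv (gK v x) tp = 0 \<longrightarrow>
               (\<forall>t. 0 < t \<and> t < tp \<longrightarrow> deriv (gK v x) t > 0) \<and>
               (\<forall>t. t > tp \<longrightarrow> deriv (gK v x) t < 0))"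
  proof
    assume h: "v^2 > x"
    obtain tp0 where tp0: "tp0 > 0" "Dd v x tp0 = 0"
      and sg: "\<forall>tp>0. Dd v x tp = 0 \<longrightarrow>
           (\<forall>t. 0 < t \<and> t < tp \<longrightarrow> Dd v x t > 0) \<and> (\<forall>t>tp. Dd v x t < 0)"
      using strong[OF x h] by blast
    have uniq: "tp = tp0" if "tp > 0" "Dd v x tp = 0" for tp
    proof (rule ccontr)
      assume "tp \<noteq> tp0"
      then have "tp < tp0 \<or> tp0 < tp" by auto
      then show False
      proof
        assume "tp < tp0" then have "Dd v x tp > 0" using sg tp0 that by blast
        then show False using that by simp
      next
        assume "tp0 < tp" then have "Dd v x tp < 0" using sg tp0 that by blast
        then show False using that by simp
      qed
    qed
    show "(\<exists>!tp. tp > 0 \<and> deriv (gK v x) tp = 0) \<and>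
            (\<forall>tp. tp > 0 \<and> deriv (gK v x) tp = 0 \<longrightarrow>
               (\<forall>t. 0 < t \<and> t < tp \<longrightarrow> deriv (gK v x) t > 0) \<and>
               (\<forall>t. t > tp \<longrightarrow> deriv (gK v x) t < 0))"
      unfolding deriv_gK using tp0 uniq sg by blast
  qed
  have uni: "\<exists>m\<ge>0. (\<forall>s t. 0 \<le> s \<and> s \<le> t \<and> t \<le> m \<longrightarrow> gK v x s \<le> gK v x t)
                   \<and> (\<forall>s t. m \<le> s \<and> s \<le> t \<longrightarrow> gK v x t \<le> gK v x s)"
  proof (cases "v^2 \<le> x")
    case True
    then show ?thesis using monoA[OF True] by (intro exI[of _ 0]) auto
  next
    case False
    then have h: "v^2 > x" by simp
    obtain tp0 where tp0: "tp0 > 0" "Dd v x tp0 = 0"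
      and sg: "\<forall>tp>0. Dd v x tp = 0 \<longrightarrow>
           (\<forall>t. 0 < t \<and> t < tp \<longrightarrow> Dd v x t > 0) \<and> (\<forall>t>tp. Dd v x t < 0)"
      using strong[OF x h] by blast
    have inc: "gK v x s \<le> gK v x t" if st: "0 \<le> s" "s \<le> t" "t \<le> tp0" for s t
    proof (rule DERIV_nonneg_imp_nondecreasing[OF st(2)])
      fix y assume y: "s \<le> y" "y \<le> t"
      have "Dd v x y \<ge> 0"
      proof -
        consider "y = 0" | "0 < y \<and> y < tp0" | "y = tp0" using y st by linarith
        then show ?thesis
        proof cases
          case 1 then show ?thesis by (simp add: Dd_def)
        next
          case 2 then have "Dd v x y > 0" using sg tp0 by blast
          then show ?thesis by simp
        next
          case 3 then show ?thesis using tp0 by simp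
        qed
      qed
      then show "\<exists>d. (gK v x has_real_derivative d) (at y) \<and> d \<ge> 0"
        using gK_deriv' by blast
    qed
    have dec: "gK v x t \<le> gK v x s" if "tp0 \<le> s" "s \<le> t" for s t
    proof (rule DERIV_nonpos_imp_nonincreasing[OF that(2)])
      fix y assume y: "s \<le> y" "y \<le> t"
      have "Dd v x y \<le> 0"
      proof (cases "y = tp0")
        case True then show ?thesis using tp0 by simp
      next
        case False then have "y > tp0" using y that by linarith
        then have "Dd v x y < 0" using sg tp0 by blast
        then show ?thesis by simp
      qed
      then show "\<exists>d. (gK v x has_real_derivative d) (at y) \<and> d \<le> 0"
        using gK_deriv' by blast
    qed
    show ?thesis using inc dec tp0 by (intro exI[of _ tp0]) auto
  qed
  then obtain m where m: "m \<ge> 0"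
    and inc: "\<And>s t. 0 \<le> s \<Longrightarrow> s \<le> t \<Longrightarrow> t \<le> m \<Longrightarrow> gK v x s \<le> gK v x t"
    and dec: "\<And>s t. m \<le> s \<Longrightarrow> s \<le> t \<Longrightarrow> gK v x t \<le> gK v x s"
    by blast
  have fmono: "fK v x a \<le> fK v x b \<longleftrightarrow> gK v x a \<le> gK v x b" for a b
    unfolding fK_exp by simp
  have fpos: "fK v x t > 0" for t unfolding fK_exp by simp
  have P3: "\<exists>tp\<ge>0. \<forall>t\<ge>0. fK v x t \<le> fK v x tp"
  proof (intro exI[of _ m] conjI allI impI)
    fix t :: real assume t: "t \<ge> 0"
    show "fK v x t \<le> fK v x m"
    proof (cases "t \<le> m")
      case True then show ?thesis using inc[OF t True] by (simp add: fmono)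
    next
      case False then show ?thesis using dec[of m t] by (simp add: fmono)
    qed
  qed (use m in auto)
  have P4: "\<forall>tp. tp \<ge> 0 \<and> (\<forall>t\<ge>0. fK v x t \<le> fK v x tp) \<longrightarrow>
            (\<forall>\<epsilon>. 0 < \<epsilon> \<and> \<epsilon> < 1 \<longrightarrow>
              (\<exists>t0 t1. 0 \<le> t0 \<and> t0 \<le> tp \<and> tp \<le> t1 \<and>
                 {t. t \<ge> 0 \<and> fK v x t \<ge> \<epsilon> * fK v x tp} = {t0..t1}))"
  proof (intro allI impI)
    fix tp \<epsilon> :: real
    assume tp: "tp \<ge> 0 \<and> (\<forall>t\<ge>0. fK v x t \<le> fK v x tp)" and e: "0 < \<epsilon> \<and> \<epsilon> < 1"
    define c where "c = \<epsilon> * fK v x tp"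
    have c: "c > 0" "c \<le> fK v x tp" using e fpos[of tp] unfolding c_def by auto
    define S where "S = {t. t \<ge> 0 \<and> fK v x t \<ge> c}"
    have tpS: "tp \<in> S" using tp c unfolding S_def by auto
    have quasi: "u \<in> S" if "s \<in> S" "w \<in> S" "s \<le> u" "u \<le> w" for s u w
    proof (cases "u \<le> m")
      case True
      have "gK v x s \<le> gK v x u" using inc[OF _ that(3) True] that(1) unfolding S_def by auto
      then have "fK v x s \<le> fK v x u" by (simp add: fmono)
      then show ?thesis using that unfolding S_def by auto
    next
      case False
      have "gK v x w \<le> gK v x u" using dec[of u w] False that by auto
      then have "fK v x w \<le> fK v x u" by (simp add: fmono)
      then show ?thesis using that unfolding S_def by auto
    qed
    obtain N where N: "\<forall>t\<ge>N. fK v x t < c" using fK_lim[OF c(1) x] by blast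
    have bda: "bdd_above S"
    proof (rule bdd_aboveI[of _ N])
      fix t assume "t \<in> S"
      then have "\<not> fK v x t < c" unfolding S_def by auto
      then show "t \<le> N" using N by (meson linorder_le_less_linear less_imp_le)
    qed
    have bdb: "bdd_below S" by (rule bdd_belowI[of _ 0]) (auto simp: S_def)
    have cont: "continuous_on UNIV (\<lambda>t. fK v x t)"
      unfolding fK_def by (intro continuous_intros)
    have cl: "closed S" unfolding S_def
      by (intro closed_Collect_conj closed_Collect_le continuous_intros cont)
    have ne: "S \<noteq> {}" using tpS by auto
    have IS: "Inf S \<in> S" by (rule closed_contains_Inf[OF ne bdb cl])
    have SS: "Sup S \<in> S" by (rule closed_contains_Sup[OF ne bda cl])
    have eq: "S = {Inf S..Sup S}"
    proof
      show "S \<subseteq> {Inf S..Sup S}" using cInf_lower[OF _ bdb] cSup_upper[OF _ bda] by auto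
      show "{Inf S..Sup S} \<subseteq> S" using quasi[OF IS SS] by auto
    qed
    show "\<exists>t0 t1. 0 \<le> t0 \<and> t0 \<le> tp \<and> tp \<le> t1 \<and>
                 {t. t \<ge> 0 \<and> fK v x t \<ge> \<epsilon> * fK v x tp} = {t0..t1}"
    proof (intro exI conjI)
      show "0 \<le> Inf S" using IS unfolding S_def by auto
      show "Inf S \<le> tp" by (rule cInf_lower[OF tpS bdb])
      show "tp \<le> Sup S" by (rule cSup_upper[OF tpS bda])
      show "{t. t \<ge> 0 \<and> fK v x t \<ge> \<epsilon> * fK v x tp} = {Inf S..Sup S}"
        using eq unfolding S_def c_def .
    qed
  qed
  show ?thesis using P1 P2 P3 P4 by blast
qed

end
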